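(* Let $G$ be a finite simple connected graph. Suppose that all the holes in $G$ are pairwise edge-disjoint and that $G$ has exactly one non-edge maximal clique $K$. Then a cycle $C$ in $G$ is a hole if and only if $|V(K)\cap V(C)|\le 2$.
   Context: A hole of a graph is an induced (chordless) cycle of length at least $4$. A clique is a complete subgraph; a clique $K$ is non-edge if $|V(K)|\ge 3$. Cycles have length at least $3$. *)

theory Defs
  imports Main
begin

definition simple_graph :: "'a set \<Rightarrow> ('a \<Rightarrow> 'a \<Rightarrow> bool) \<Rightarrow> bool" where
  "simple_graph V E \<longleftrightarrow> finite V \<and> (\<forall>u v. E u v \<longrightarrow> u \<in> V \<and> v \<in> V) \<and>
     (\<forall>u v. E u v \<longrightarrow> E v u) \<and> (\<forall>v. \<not> E v v)"

definition connected_graph :: "'a set \<Rightarrow> ('a \<Rightarrow> 'a \<Rightarrow> bool) \<Rightarrow> bool" where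
  "connected_graph V E \<longleftrightarrow> V \<noteq> {} \<and> (\<forall>u\<in>V. \<forall>v\<in>V. E\<^sup>*\<^sup>* u v)"

definition is_cycle :: "'a set \<Rightarrow> ('a \<Rightarrow> 'a \<Rightarrow> bool) \<Rightarrow> 'a list \<Rightarrow> bool" where
  "is_cycle V E C \<longleftrightarrow> length C \<ge> 3 \<and> distinct C \<and> set C \<subseteq> V \<and>
     (\<forall>i < length C. E (C ! i) (C ! ((i + 1) mod length C)))"

definition cycle_edges :: "'a list \<Rightarrow> 'a set set" where
  "cycle_edges C = {{C ! i, C ! ((i + 1) mod length C)} | i. i < length C}"

definition is_hole :: "'a set \<Rightarrow> ('a \<Rightarrow> 'a \<Rightarrow> bool) \<Rightarrow> 'a list \<Rightarrow> bool" where
  "is_hole V E C \<longleftrightarrow> is_cycle V E C \<and> length C \<ge> 4 \<and>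
     (\<forall>u\<in>set C. \<forall>v\<in>set C. E u v \<longrightarrow> {u, v} \<in> cycle_edges C)"

definition is_clique :: "'a set \<Rightarrow> ('a \<Rightarrow> 'a \<Rightarrow> bool) \<Rightarrow> 'a set \<Rightarrow> bool" where
  "is_clique V E K \<longleftrightarrow> K \<subseteq> V \<and> (\<forall>u\<in>K. \<forall>v\<in>K. u \<noteq> v \<longrightarrow> E u v)"

definition maximal_clique :: "'a set \<Rightarrow> ('a \<Rightarrow> 'a \<Rightarrow> bool) \<Rightarrow> 'a set \<Rightarrow> bool" where
  "maximal_clique V E K \<longleftrightarrow> is_clique V E K \<and> K \<noteq> {} \<and>
     (\<forall>K'. is_clique V E K' \<and> K \<subseteq> K' \<longrightarrow> K' = K)"

text \<open>Distinct holes (different as subgraphs, i.e. with different edge sets) share no edge.\<close>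
definition holes_edge_disjoint :: "'a set \<Rightarrow> ('a \<Rightarrow> 'a \<Rightarrow> bool) \<Rightarrow> bool" where
  "holes_edge_disjoint V E \<longleftrightarrow> (\<forall>C1 C2. is_hole V E C1 \<and> is_hole V E C2 \<and>
     cycle_edges C1 \<noteq> cycle_edges C2 \<longrightarrow> cycle_edges C1 \<inter> cycle_edges C2 = {})"

end

theory Submission
  imports Defs
begin

lemma cyc_char:
  "is_cycle V E C \<longleftrightarrow> length C \<ge> 3 \<and> distinct C \<and> set C \<subseteq> V \<and> successively E C \<and> E (last C) (hd C)"
proof
  assume c: "is_cycle V E C"
  hence l: "length C \<ge> 3" and a: "\<forall>i < length C. E (C ! i) (C ! ((i + 1) mod length C))"
    by (auto simp: is_cycle_def)
  have "successively E C" unfolding successively_conv_nth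
  proof (intro allI impI)
    fix i assume "Suc i < length C"
    thus "E (C ! i) (C ! Suc i)" using a[rule_format, of i] by simp
  qed
  moreover have "E (last C) (hd C)"
  proof -
    have s: "Suc (length C - 1) = length C" using l by simp
    have ne: "C \<noteq> []" using l by auto
    show ?thesis using a[rule_format, of "length C - 1"] l s ne by (simp add: last_conv_nth hd_conv_nth)
  qed
  ultimately show "length C \<ge> 3 \<and> distinct C \<and> set C \<subseteq> V \<and> successively E C \<and> E (last C) (hd C)"
    using c by (auto simp: is_cycle_def)
next
  assume r: "length C \<ge> 3 \<and> distinct C \<and> set C \<subseteq> V \<and> successively E C \<and> E (last C) (hd C)"
  have "E (C ! i) (C ! ((i + 1) mod length C))" if "i < length C" for i
  proof (cases "Suc i < length C")
    case True thus ?thesis using r successively_nth[of E C i] by simp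
  next
    case False
    hence "i = length C - 1" using that by simp
    moreover have "Suc (length C - 1) = length C" "C \<noteq> []" using r by auto
    ultimately show ?thesis using r that by (simp add: last_conv_nth hd_conv_nth)
  qed
  thus "is_cycle V E C" using r by (auto simp: is_cycle_def)
qed

lemma consec: "C = p @ a # b # q \<Longrightarrow> {a,b} \<in> cycle_edges C"
  unfolding cycle_edges_def
  apply (rule CollectI, rule exI[of _ "length p"])
  by (simp add: nth_append)

lemma lasthd: "C \<noteq> [] \<Longrightarrow> {last C, hd C} \<in> cycle_edges C"
  unfolding cycle_edges_def
  apply (rule CollectI, rule exI[of _ "length C - 1"])
  by (simp add: last_conv_nth hd_conv_nth)

lemma edges_subset: "e \<in> cycle_edges C \<Longrightarrow> e \<subseteq> set C"
proof -
  assume "e \<in> cycle_edges C"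
  then obtain i where i: "i < length C" "e = {C ! i, C ! ((i + 1) mod length C)}"
    unfolding cycle_edges_def by auto
  have "(i+1) mod length C < length C" using i(1) by (intro mod_less_divisor) linarith
  thus ?thesis using i by auto
qed

lemma edge_idx:
  assumes "distinct C" "{C!i, C!j} \<in> cycle_edges C" "i < length C" "j < length C"
  shows "j = Suc i mod length C \<or> i = Suc j mod length C"
proof -
  obtain a where a: "a < length C" "{C!i, C!j} = {C!a, C!((a+1) mod length C)}"
    using assms(2) unfolding cycle_edges_def by auto
  have m: "(a+1) mod length C < length C" using a(1) by (intro mod_less_divisor) linarith
  from a(2) have "(C!i = C!a \<and> C!j = C!((a+1) mod length C)) \<or> (C!i = C!((a+1) mod length C) \<and> C!j = C!a)"
    by (auto simp: doubleton_eq_iff)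
  thus ?thesis using assms a m by (auto simp: nth_eq_iff_index_eq)
qed

lemma no3:
  assumes "i < n" "j < n" "k < n" "i \<noteq> j" "j \<noteq> k" "i \<noteq> k" "4 \<le> n"
   "j = Suc i mod n \<or> i = Suc j mod n" "k = Suc j mod n \<or> j = Suc k mod n"
   "k = Suc i mod n \<or> i = Suc k mod n"
  shows False
proof -
  have h: "\<And>x. x < n \<Longrightarrow> Suc x mod n = (if Suc x = n then 0 else Suc x)"
    by (simp add: mod_Suc)
  show False using assms h[OF assms(1)] h[OF assms(2)] h[OF assms(3)]
    by (auto split: if_splits)
qed

lemma tri_in_K:
  assumes sg: "simple_graph V E" and mK: "maximal_clique V E K"
    and uq: "\<forall>K'. maximal_clique V E K' \<and> card K' \<ge> 3 \<longrightarrow> K' = K"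
    and e: "E x y" "E y z" "E x z"
  shows "x \<in> K \<and> y \<in> K \<and> z \<in> K"
proof -
  have sg': "finite V" "\<And>u v. E u v \<Longrightarrow> u \<in> V \<and> v \<in> V" "\<And>u v. E u v \<Longrightarrow> E v u" "\<And>v. \<not> E v v"
    using sg by (auto simp: simple_graph_def)
  let ?T = "{x,y,z}"
  have d: "x \<noteq> y" "y \<noteq> z" "x \<noteq> z" using e sg'(4) by auto
  have cT: "card ?T = 3" using d by simp
  let ?Q = "{K'. is_clique V E K' \<and> ?T \<subseteq> K'}"
  have "?T \<in> ?Q" using e sg'(2,3) by (auto simp: is_clique_def)
  moreover have "?Q \<subseteq> Pow V" by (auto simp: is_clique_def)
  hence "finite ?Q" using sg'(1) by (meson finite_Pow_iff finite_subset)
  ultimately obtain m where m: "m \<in> ?Q" "\<forall>b\<in>?Q. m \<le> b \<longrightarrow> m = b"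
    using finite_has_maximal[of ?Q] by blast
  have fm: "finite m" using m(1) sg'(1) by (auto simp: is_clique_def intro: finite_subset)
  have "maximal_clique V E m" unfolding maximal_clique_def using m by auto
  moreover have "card m \<ge> 3" using card_mono[OF fm, of ?T] m(1) cT by auto
  ultimately have "m = K" using uq by blast
  thus ?thesis using m(1) by auto
qed

lemma path_hole:
  assumes sg: "simple_graph V E" and S: "S \<subseteq> V"
    and notri: "\<forall>x\<in>S. \<forall>y\<in>S. \<forall>z\<in>S. \<not> (E x y \<and> E y z \<and> E x z)"
    and p: "hd p = u" "last p = v" "length p \<ge> 3" "distinct p" "set p \<subseteq> S" "successively E p"
    and uv: "E v u"
  shows "\<exists>H. is_hole V E H \<and> set H \<subseteq> set p \<and> {u,v} \<in> cycle_edges H \<and>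
            (\<exists>w. w \<notin> {u,v} \<and> {u,w} \<in> cycle_edges H)"
proof -
  have sg': "finite V" "\<And>u v. E u v \<Longrightarrow> u \<in> V \<and> v \<in> V" "\<And>u v. E u v \<Longrightarrow> E v u" "\<And>v. \<not> E v v"
    using sg by (auto simp: simple_graph_def)
  define P where "P q \<longleftrightarrow> hd q = u \<and> last q = v \<and> 3 \<le> length q \<and> distinct q \<and> set q \<subseteq> set p \<and> successively E q" for q
  have "P p" using p by (auto simp: P_def)
  then obtain q where q: "P q" and qmin: "\<And>q'. P q' \<Longrightarrow> length q \<le> length q'"
    using ex_has_least_nat[of P p length] by blast
  let ?n = "length q"
  have q3: "3 \<le> ?n" and qd: "distinct q" and qs: "set q \<subseteq> set p" and qE: "successively E q"
    using q by (auto simp: P_def)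
  have qne: "q \<noteq> []" using q3 by auto
  have q0: "q!0 = u" using q qne by (simp add: P_def hd_conv_nth)
  have qn: "q!(?n - 1) = v" using q qne by (simp add: P_def last_conv_nth)
  have ind: "b = Suc a \<or> (a = 0 \<and> b = ?n - 1)"
    if ab: "a < b" "b < ?n" "E (q!a) (q!b)" for a b
  proof (rule ccontr)
    assume nab: "\<not> (b = Suc a \<or> (a = 0 \<and> b = ?n - 1))"
    define q' where "q' = take (Suc a) q @ drop b q"
    have len: "length q' = Suc a + (?n - b)" using ab by (simp add: q'_def)
    have l1: "length q' < ?n" using len ab nab by auto
    have l2: "3 \<le> length q'" using len ab nab by auto
    have "distinct q'" unfolding q'_def using qd set_take_disj_set_drop_if_distinct[OF qd, of "Suc a" b] ab
      by auto
    moreover have "hd q' = u" unfolding q'_def using q qne by (cases q) (auto simp: P_def)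
    moreover have "last q' = v" unfolding q'_def using ab q by (simp add: P_def)
    moreover have "set q' \<subseteq> set p" unfolding q'_def using qs set_take_subset set_drop_subset by fastforce
    moreover have "successively E q'"
    proof -
      have "successively E (take (Suc a) q)" using qE by (simp add: successively_conv_nth)
      moreover have "successively E (drop b q)" using qE by (simp add: successively_conv_nth)
      moreover have "last (take (Suc a) q) = q!a" using ab by (subst last_conv_nth) (auto simp: min_def)
      moreover have "hd (drop b q) = q!b" using ab by (simp add: hd_drop_conv_nth)
      ultimately show ?thesis unfolding q'_def using ab by (simp add: successively_append_iff)
    qed
    ultimately have "P q'" using l2 by (simp add: P_def)
    thus False using qmin l1 by fastforce
  qed
  have Euv: "E u v" using uv sg'(3) by blast
  have cyc: "is_cycle V E q" unfolding cyc_char using q S uv p(5) by (auto simp: P_def)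
  have q4: "4 \<le> ?n"
  proof (rule ccontr)
    assume "\<not> 4 \<le> ?n"
    hence n3: "?n = 3" using q3 by auto
    have E1: "E (q!0) (q!1)" "E (q!1) (q!Suc 1)" using successively_nth[OF qE, of 0] successively_nth[OF qE, of 1] n3 by auto
    have qS: "set q \<subseteq> S" using qs p(5) by auto
    have "q!0 \<in> set q" "q!1 \<in> set q" "q!Suc 1 \<in> set q" using n3 by (auto intro!: nth_mem)
    hence S3: "q!0 \<in> S" "q!1 \<in> S" "q!Suc 1 \<in> S" using qS by auto
    have E2: "E (q!0) (q!Suc 1)" using q0 qn n3 Euv by (simp add: numeral_2_eq_2)
    show False using notri S3 E1 E2 by blast
  qed
  have chordless: "\<forall>x\<in>set q. \<forall>y\<in>set q. E x y \<longrightarrow> {x, y} \<in> cycle_edges q"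
  proof (intro ballI impI)
    fix x y assume xy: "x \<in> set q" "y \<in> set q" "E x y"
    obtain a b where a: "a < ?n" "x = q!a" and b: "b < ?n" "y = q!b"
      using xy by (auto simp: in_set_conv_nth)
    have "a \<noteq> b" using xy(3) a b sg'(4) by auto
    hence "a < b \<or> b < a" by auto
    thus "{x, y} \<in> cycle_edges q"
    proof
      assume "a < b"
      hence "b = Suc a \<or> (a = 0 \<and> b = ?n - 1)" using ind b a xy by auto
      thus ?thesis
      proof
        assume "b = Suc a"
        thus ?thesis unfolding cycle_edges_def using a b by auto
      next
        assume h: "a = 0 \<and> b = ?n - 1"
        have "{q!(?n-1), q!((?n - 1 + 1) mod ?n)} \<in> cycle_edges q"
          unfolding cycle_edges_def using qne by auto
        moreover have "(?n - 1 + 1) mod ?n = 0" using qne by simp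
        ultimately show ?thesis using h a b by (simp add: insert_commute)
      qed
    next
      assume "b < a"
      hence "a = Suc b \<or> (b = 0 \<and> a = ?n - 1)" using ind b a xy sg'(3) by auto
      thus ?thesis
      proof
        assume "a = Suc b"
        hence "{y,x} \<in> cycle_edges q" unfolding cycle_edges_def using a b by auto
        thus ?thesis by (simp add: insert_commute)
      next
        assume h: "b = 0 \<and> a = ?n - 1"
        have "{q!(?n-1), q!((?n - 1 + 1) mod ?n)} \<in> cycle_edges q"
          unfolding cycle_edges_def using qne by auto
        moreover have "(?n - 1 + 1) mod ?n = 0" using qne by simp
        ultimately show ?thesis using h a b by (simp add: insert_commute)
      qed
    qed
  qed
  have hole: "is_hole V E q" unfolding is_hole_def using cyc q4 chordless by auto
  have e1: "{u,v} \<in> cycle_edges q"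
  proof -
    have "{q!(?n-1), q!((?n - 1 + 1) mod ?n)} \<in> cycle_edges q"
      unfolding cycle_edges_def using qne by auto
    moreover have "(?n - 1 + 1) mod ?n = 0" using qne by simp
    ultimately show ?thesis using q0 qn by (simp add: insert_commute)
  qed
  have w1: "q!1 \<noteq> q!0" using qd q4 by (subst nth_eq_iff_index_eq) auto
  have w2: "q!1 \<noteq> q!(?n - 1)" using qd q4 by (subst nth_eq_iff_index_eq) auto
  have w: "q!1 \<notin> {u,v}" using q0 qn w1 w2 by auto
  have e2: "{u, q!1} \<in> cycle_edges q"
    unfolding cycle_edges_def using q0 q4 by (auto intro!: exI[of _ 0])
  show ?thesis using hole qs e1 w e2 by blast
qed


lemma chord_split:
  assumes "u \<in> set C" "v \<in> set C" "u \<noteq> v" "{u,v} \<notin> cycle_edges C"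
  shows "\<exists>xs ys zs. (C = xs @ u # ys @ v # zs \<or> C = xs @ v # ys @ u # zs) \<and> ys \<noteq> [] \<and> zs @ xs \<noteq> []"
proof -
  obtain xs r where C: "C = xs @ u # r" using assms(1) split_list by fastforce
  have "v \<in> set r \<or> v \<in> set xs" using assms(2,3) C by auto
  thus ?thesis
  proof
    assume "v \<in> set r"
    then obtain ys zs where r: "r = ys @ v # zs" using split_list by fastforce
    have "ys \<noteq> []"
    proof
      assume "ys = []"
      hence "{u,v} \<in> cycle_edges C" using C r consec[of C xs u v zs] by simp
      thus False using assms(4) by simp
    qed
    moreover have "zs @ xs \<noteq> []"
    proof
      assume "zs @ xs = []"
      hence "{last C, hd C} = {u,v}" using C r by auto
      thus False using assms(4) lasthd[of C] C by auto
    qed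
    ultimately show ?thesis using C r by blast
  next
    assume "v \<in> set xs"
    then obtain a b where xs: "xs = a @ v # b" using split_list by fastforce
    have "b \<noteq> []"
    proof
      assume "b = []"
      hence "{v,u} \<in> cycle_edges C" using C xs consec[of C a v u r] by simp
      thus False using assms(4) by (simp add: insert_commute)
    qed
    moreover have "r @ a \<noteq> []"
    proof
      assume "r @ a = []"
      hence "{last C, hd C} = {u,v}" using C xs by auto
      thus False using assms(4) lasthd[of C] C by auto
    qed
    ultimately show ?thesis using C xs by (intro exI[of _ a] exI[of _ b] exI[of _ r]) auto
  qed
qed

lemma chord_contra:
  assumes sg: "simple_graph V E" and hd: "holes_edge_disjoint V E"
    and cyc: "is_cycle V E C"
    and notri: "\<forall>x\<in>set C. \<forall>y\<in>set C. \<forall>z\<in>set C. \<not> (E x y \<and> E y z \<and> E x z)"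
    and C: "C = xs @ u # ys @ v # zs" and ne: "ys \<noteq> []" "zs @ xs \<noteq> []"
    and uv: "E u v"
  shows False
proof -
  have sg': "finite V" "\<And>u v. E u v \<Longrightarrow> u \<in> V \<and> v \<in> V" "\<And>u v. E u v \<Longrightarrow> E v u" "\<And>v. \<not> E v v"
    using sg by (auto simp: simple_graph_def)
  have cc: "length C \<ge> 3" "distinct C" "set C \<subseteq> V" "successively E C" "E (last C) (hd C)"
    using cyc unfolding cyc_char by auto
  define p1 where "p1 = u # ys @ [v]"
  define p2 where "p2 = v # zs @ xs @ [u]"
  have vu: "E v u" using uv sg'(3) by blast
  have s1: "successively E p1"
  proof -
    have "C = xs @ p1 @ zs" using C p1_def by simp
    thus ?thesis using cc(4) by (simp add: successively_append_iff del: successively.simps)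
  qed
  have s2: "successively E p2"
  proof -
    have a: "successively E (v # zs)"
    proof -
      have "C = (xs @ u # ys) @ (v # zs)" using C by simp
      thus ?thesis using cc(4) by (simp only: successively_append_iff)
    qed
    have b: "successively E (xs @ [u])"
    proof -
      have "C = (xs @ [u]) @ (ys @ v # zs)" using C by simp
      thus ?thesis using cc(4) by (simp only: successively_append_iff)
    qed
    have "last (v # zs) = last C" "hd (xs @ [u]) = hd C" using C by (auto simp: hd_append)
    hence "E (last (v # zs)) (hd (xs @ [u]))" using cc(5) by simp
    hence "successively E ((v # zs) @ (xs @ [u]))" using a b
      by (simp only: successively_append_iff) simp
    thus ?thesis unfolding p2_def by simp
  qed
  have dC: "distinct C" using cc by simp
  have d1: "distinct p1" using dC C unfolding p1_def by auto
  have d2: "distinct p2" using dC C unfolding p2_def by auto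
  have set1: "set p1 \<subseteq> set C" using C unfolding p1_def by auto
  have set2: "set p2 \<subseteq> set C" using C unfolding p2_def by auto
  have disj: "set ys \<inter> set p2 = {}" using dC C unfolding p2_def by auto
  have S: "set C \<subseteq> V" using cc by simp
  have "3 \<le> length p1" using ne(1) unfolding p1_def by (cases ys) auto
  with path_hole[OF sg S notri _ _ _ d1 set1 s1 vu]
  obtain H1 w where H1: "is_hole V E H1" "set H1 \<subseteq> set p1" "{u,v} \<in> cycle_edges H1"
      and w: "w \<notin> {u,v}" "{u,w} \<in> cycle_edges H1"
    unfolding p1_def by auto
  have "3 \<le> length p2" proof -
    have "length (zs @ xs) \<ge> 1" using ne(2) by (cases "zs @ xs") auto
    thus ?thesis unfolding p2_def by simp
  qed
  with path_hole[OF sg S notri _ _ _ d2 set2 s2 uv]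
  obtain H2 where H2: "is_hole V E H2" "set H2 \<subseteq> set p2" "{v,u} \<in> cycle_edges H2"
    unfolding p2_def by auto
  have "w \<in> set H1" using edges_subset[OF w(2)] by auto
  hence "w \<in> set ys" using H1(2) w(1) unfolding p1_def by auto
  hence "w \<notin> set H2" using H2(2) disj by auto
  hence "{u,w} \<notin> cycle_edges H2" using edges_subset[of "{u,w}" H2] by auto
  hence "cycle_edges H1 \<noteq> cycle_edges H2" using w(2) by auto
  hence "cycle_edges H1 \<inter> cycle_edges H2 = {}" using hd H1(1) H2(1) unfolding holes_edge_disjoint_def by blast
  thus False using H1(3) H2(3) by (auto simp: insert_commute)
qed


lemma three_elems:
  assumes "3 \<le> card A"
  shows "\<exists>x y z. x \<in> A \<and> y \<in> A \<and> z \<in> A \<and> x \<noteq> y \<and> y \<noteq> z \<and> x \<noteq> z"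
proof -
  from assms have "Suc 2 \<le> card A" by simp
  then obtain x B where B: "A = insert x B" "x \<notin> B" "Suc 1 \<le> card B" using card_le_Suc_iff[of 2 A] by auto
  then obtain y B' where B': "B = insert y B'" "y \<notin> B'" "Suc 0 \<le> card B'" using card_le_Suc_iff[of 1 B] by auto
  then obtain z B'' where B'': "B' = insert z B''" "z \<notin> B''" using card_le_Suc_iff[of 0 B'] by auto
  show ?thesis using B B' B'' by (intro exI[of _ x] exI[of _ y] exI[of _ z]) auto
qed

theorem lemma2:
  fixes V :: "'a set" and E :: "'a \<Rightarrow> 'a \<Rightarrow> bool" and K :: "'a set"
  assumes "simple_graph V E" and "connected_graph V E"
    and "holes_edge_disjoint V E"
    and "maximal_clique V E K" and "card K \<ge> 3"
    and "\<forall>K'. maximal_clique V E K' \<and> card K' \<ge> 3 \<longrightarrow> K' = K"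
  shows "\<forall>C. is_cycle V E C \<longrightarrow> (is_hole V E C \<longleftrightarrow> card (K \<inter> set C) \<le> 2)"
proof (intro allI impI)
  fix C assume cyc: "is_cycle V E C"
  note sg = assms(1)
  have sg': "finite V" "\<And>u v. E u v \<Longrightarrow> u \<in> V \<and> v \<in> V" "\<And>u v. E u v \<Longrightarrow> E v u" "\<And>v. \<not> E v v"
    using sg by (auto simp: simple_graph_def)
  have cc: "length C \<ge> 3" "distinct C" "set C \<subseteq> V" "successively E C" "E (last C) (hd C)"
    using cyc unfolding cyc_char by auto
  have cadj: "\<And>i. i < length C \<Longrightarrow> E (C ! i) (C ! ((i + 1) mod length C))"
    using cyc unfolding is_cycle_def by auto
  have KC: "\<And>x. x \<in> K \<Longrightarrow> \<forall>y\<in>K. x \<noteq> y \<longrightarrow> E x y" using assms(4)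
    unfolding maximal_clique_def is_clique_def by auto
  show "is_hole V E C \<longleftrightarrow> card (K \<inter> set C) \<le> 2"
  proof
    assume h: "is_hole V E C"
    show "card (K \<inter> set C) \<le> 2"
    proof (rule ccontr)
      assume "\<not> card (K \<inter> set C) \<le> 2"
      hence "3 \<le> card (K \<inter> set C)" by simp
      then obtain x y z where xyz: "x \<in> K \<inter> set C" "y \<in> K \<inter> set C" "z \<in> K \<inter> set C"
        "x \<noteq> y" "y \<noteq> z" "x \<noteq> z" using three_elems by blast
      obtain i where i: "i < length C" "x = C!i" using xyz by (auto simp: in_set_conv_nth)
      obtain j where j: "j < length C" "y = C!j" using xyz by (auto simp: in_set_conv_nth)
      obtain k where k: "k < length C" "z = C!k" using xyz by (auto simp: in_set_conv_nth)
      have ch: "\<forall>u\<in>set C. \<forall>v\<in>set C. E u v \<longrightarrow> {u, v} \<in> cycle_edges C" and l4: "4 \<le> length C"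
        using h unfolding is_hole_def by auto
      have "{x,y} \<in> cycle_edges C" "{y,z} \<in> cycle_edges C" "{x,z} \<in> cycle_edges C"
        using ch xyz KC by auto
      hence "j = Suc i mod length C \<or> i = Suc j mod length C"
        "k = Suc j mod length C \<or> j = Suc k mod length C"
        "k = Suc i mod length C \<or> i = Suc k mod length C"
        using edge_idx[OF cc(2)] i j k by auto
      moreover have "i \<noteq> j" "j \<noteq> k" "i \<noteq> k" using i j k xyz by auto
      ultimately show False using no3[OF i(1) j(1) k(1) _ _ _ l4] by blast
    qed
  next
    assume c2: "card (K \<inter> set C) \<le> 2"
    have notri: "\<forall>x\<in>set C. \<forall>y\<in>set C. \<forall>z\<in>set C. \<not> (E x y \<and> E y z \<and> E x z)"
    proof (intro ballI notI)
      fix x y z assume xyz: "x \<in> set C" "y \<in> set C" "z \<in> set C" and e: "E x y \<and> E y z \<and> E x z"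
      have "x \<in> K \<and> y \<in> K \<and> z \<in> K" using tri_in_K[OF sg assms(4) assms(6)] e by blast
      hence sub: "{x,y,z} \<subseteq> K \<inter> set C" using xyz by auto
      have "x \<noteq> y" "y \<noteq> z" "x \<noteq> z" using e sg'(4) by auto
      hence "card {x,y,z} = 3" by simp
      moreover have "card {x,y,z} \<le> card (K \<inter> set C)" by (rule card_mono[OF _ sub]) simp
      ultimately show False using c2 by simp
    qed
    have l4: "4 \<le> length C"
    proof (rule ccontr)
      assume "\<not> 4 \<le> length C"
      hence n3: "length C = 3" using cc by auto
      have "E (C!0) (C!1)" "E (C!1) (C!2)" "E (C!2) (C!0)" using cadj[of 0] cadj[of 1] cadj[of 2] n3 by (auto simp: numeral_2_eq_2)
      moreover have "C!0 \<in> set C" "C!1 \<in> set C" "C!2 \<in> set C" using n3 by (auto intro!: nth_mem)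
      ultimately show False using notri sg'(3) by blast
    qed
    have ch: "\<forall>u\<in>set C. \<forall>v\<in>set C. E u v \<longrightarrow> {u, v} \<in> cycle_edges C"
    proof (intro ballI impI; rule ccontr)
      fix u v assume uv: "u \<in> set C" "v \<in> set C" "E u v" "{u, v} \<notin> cycle_edges C"
      have "u \<noteq> v" using uv sg'(4) by auto
      then obtain xs ys zs where s: "C = xs @ u # ys @ v # zs \<or> C = xs @ v # ys @ u # zs"
        "ys \<noteq> []" "zs @ xs \<noteq> []" using chord_split[of u C v] uv by blast
      show False using s(1)
      proof
        assume "C = xs @ u # ys @ v # zs"
        thus False using chord_contra[OF sg assms(3) cyc notri _ s(2,3)] uv(3) by blast
      next
        assume "C = xs @ v # ys @ u # zs"
        thus False using chord_contra[OF sg assms(3) cyc notri _ s(2,3)] uv(3) sg'(3) by blast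
      qed
    qed
    show "is_hole V E C" unfolding is_hole_def using cyc l4 ch by auto
  qed
qed

end
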